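(* Let $X\subseteq\mathbb{C}^n$ be a complex analytic variety, $x\in X$, and $M$ an $\mathcal{O}_{X,x}$-submodule of $\mathcal{O}_{X,x}^p$. Then $M_{S_1}\subseteq M_{S_2}$.
   Context: $\pi_1,\pi_2:X\times X\to X$ are the projections. For $h\in\mathcal{O}_{X,x}^p$ (or $\mathcal{O}_{X,x}$), $h_D=(h\circ\pi_1,h\circ\pi_2)$; for a submodule $M$ (or ideal), $M_D$ is the submodule over $\mathcal{O}_{X\times X,(x,x)}$ generated by $\{h_D:h\in M\}$. $\overline{N}$ is integral closure. For an ideal $I$, $I_S$ is its Lipschitz saturation, characterized by $f\in I_S$ iff $f_D\in\overline{I_D}$ (equivalently $\pi_S^*(f)\in\pi_S^*(I)$ for the saturated blow-up $\pi_S:SB_I(X)\to X$). For an analytic map germ $\psi=(\psi_1,\dots,\psi_p):X\to\mathrm{Hom}(\mathbb{C}^p,\mathbb{C})$, $\psi\cdot h=\sum_i\psi_ih_i$ and $\psi\cdot M$ is the ideal generated by $\{\psi\cdot g:g\in M\}$. $M_{S_1}=\{h: h_D\in\overline{M_D}\}$; $M_{S_2}=\{h:\psi\cdot h\in(\psi\cdot M)_S\ \forall\psi\}$. *)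

theory Defs
  imports "HOL-Analysis.Analysis"
begin

definition cJ :: "complex^'n \<Rightarrow> complex^'n" where
  "cJ v = \<i> *s v"

definition cJ2 :: "(complex^'n) \<times> (complex^'n) \<Rightarrow> (complex^'n) \<times> (complex^'n)" where
  "cJ2 w = (\<i> *s fst w, \<i> *s snd w)"

definition holo_on :: "('a::real_normed_vector \<Rightarrow> 'a) \<Rightarrow> 'a set \<Rightarrow> ('a \<Rightarrow> complex) \<Rightarrow> bool" where
  "holo_on J U f \<longleftrightarrow> open U \<and>
     (\<forall>z\<in>U. \<exists>D. (f has_derivative D) (at z) \<and> (\<forall>v. D (J v) = \<i> * D v))"

definition germ_at :: "('a::real_normed_vector \<Rightarrow> 'a) \<Rightarrow> 'a \<Rightarrow> ('a \<Rightarrow> complex) \<Rightarrow> bool" where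
  "germ_at J y f \<longleftrightarrow> (\<exists>U. y \<in> U \<and> holo_on J U f)"

definition vgerm_at :: "('a::real_normed_vector \<Rightarrow> 'a) \<Rightarrow> 'a \<Rightarrow> ('a \<Rightarrow> 'i \<Rightarrow> complex) \<Rightarrow> bool" where
  "vgerm_at J y h \<longleftrightarrow> (\<forall>i. germ_at J y (\<lambda>z. h z i))"

text \<open>Equality of germs on the variety Y at y (i.e. equality in O_{Y,y}).\<close>

definition germ_eq_on :: "'a::topological_space set \<Rightarrow> 'a \<Rightarrow> ('a \<Rightarrow> 'b) \<Rightarrow> ('a \<Rightarrow> 'b) \<Rightarrow> bool" where
  "germ_eq_on Y y f g \<longleftrightarrow> (\<exists>U. open U \<and> y \<in> U \<and> (\<forall>z\<in>U \<inter> Y. f z = g z))"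

definition analytic_variety :: "(complex^'n) set \<Rightarrow> bool" where
  "analytic_variety X \<longleftrightarrow>
     (\<forall>z\<in>X. \<exists>U (k::nat) g. z \<in> U \<and> (\<forall>j<k. holo_on cJ U (g j)) \<and>
        X \<inter> U = {w\<in>U. \<forall>j<k. g j w = 0})"

text \<open>O_{Y,y}-submodule of O_{Y,y}^I, represented by the set of all its representatives.\<close>

definition is_submodule :: "('a::real_normed_vector \<Rightarrow> 'a) \<Rightarrow> 'a set \<Rightarrow> 'a \<Rightarrow> ('a \<Rightarrow> 'i \<Rightarrow> complex) set \<Rightarrow> bool" where
  "is_submodule J Y y M \<longleftrightarrow>
     (\<forall>h\<in>M. vgerm_at J y h) \<and> (\<lambda>z i. 0) \<in> M \<and>
     (\<forall>g\<in>M. \<forall>h\<in>M. (\<lambda>z i. g z i + h z i) \<in> M) \<and>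
     (\<forall>a. \<forall>h\<in>M. germ_at J y a \<longrightarrow> (\<lambda>z i. a z * h z i) \<in> M) \<and>
     (\<forall>h\<in>M. \<forall>g. vgerm_at J y g \<and> germ_eq_on Y y g h \<longrightarrow> g \<in> M)"

definition gen_mod :: "('a::real_normed_vector \<Rightarrow> 'a) \<Rightarrow> 'a set \<Rightarrow> 'a \<Rightarrow> ('a \<Rightarrow> 'i \<Rightarrow> complex) set \<Rightarrow> ('a \<Rightarrow> 'i \<Rightarrow> complex) set" where
  "gen_mod J Y y S = {h. vgerm_at J y h \<and>
     (\<exists>(k::nat) a g. (\<forall>j<k. germ_at J y (a j) \<and> g j \<in> S) \<and>
        germ_eq_on Y y h (\<lambda>z i. \<Sum>j<k. a j z * g j z i))}"

definition curve_at :: "('a::real_normed_vector \<Rightarrow> 'a) \<Rightarrow> 'a set \<Rightarrow> 'a \<Rightarrow> (complex \<Rightarrow> 'a) \<Rightarrow> bool" where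
  "curve_at J Y y \<phi> \<longleftrightarrow> \<phi> 0 = y \<and>
     (\<exists>U. open U \<and> 0 \<in> U \<and> \<phi> ` U \<subseteq> Y \<and>
        (\<forall>t\<in>U. \<exists>D. (\<phi> has_derivative D) (at t) \<and> (\<forall>s. D (\<i> * s) = J (D s))))"

text \<open>Integral closure of a submodule N of O_{Y,y}^I (curve criterion / Gaffney's definition):
  h is in the closure iff for every curve phi, h o phi lies in the O_1-module phi^*(N) O_1.\<close>

definition int_cl :: "('a::real_normed_vector \<Rightarrow> 'a) \<Rightarrow> 'a set \<Rightarrow> 'a \<Rightarrow> ('a \<Rightarrow> 'i \<Rightarrow> complex) set \<Rightarrow> ('a \<Rightarrow> 'i \<Rightarrow> complex) set" where
  "int_cl J Y y N = {h. vgerm_at J y h \<and>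
     (\<forall>\<phi>. curve_at J Y y \<phi> \<longrightarrow>
       (\<exists>(k::nat) a g. (\<forall>j<k. (\<exists>U. open U \<and> 0 \<in> U \<and> a j holomorphic_on U) \<and> g j \<in> N) \<and>
          (\<forall>\<^sub>F t in nhds 0. \<forall>i. h (\<phi> t) i = (\<Sum>j<k. a j t * g j (\<phi> t) i))))}"

text \<open>The double h_D = (h o pi1, h o pi2), a 2p-tuple indexed by 'i + 'i.\<close>

definition dbl :: "('b \<Rightarrow> 'i \<Rightarrow> complex) \<Rightarrow> ('b \<times> 'b \<Rightarrow> 'i + 'i \<Rightarrow> complex)" where
  "dbl h = (\<lambda>w. case_sum (h (fst w)) (h (snd w)))"

text \<open>Ideals of O_{X,x} are represented as submodules of O_{X,x}^1, i.e. index type unit.\<close>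

definition pdot :: "('b \<Rightarrow> 'p::finite \<Rightarrow> complex) \<Rightarrow> ('b \<Rightarrow> 'p \<Rightarrow> complex) \<Rightarrow> ('b \<Rightarrow> unit \<Rightarrow> complex)" where
  "pdot \<psi> h = (\<lambda>z _. \<Sum>i\<in>UNIV. \<psi> z i * h z i)"

definition lip_sat :: "(complex^'n) set \<Rightarrow> complex^'n \<Rightarrow> (complex^'n \<Rightarrow> unit \<Rightarrow> complex) set \<Rightarrow> (complex^'n \<Rightarrow> unit \<Rightarrow> complex) set" where
  "lip_sat X x I = {f. vgerm_at cJ x f \<and>
     dbl f \<in> int_cl cJ2 (X \<times> X) (x, x) (gen_mod cJ2 (X \<times> X) (x, x) (dbl ` I))}"

definition M_S1 :: "(complex^'n) set \<Rightarrow> complex^'n \<Rightarrow> (complex^'n \<Rightarrow> 'p::finite \<Rightarrow> complex) set \<Rightarrow> (complex^'n \<Rightarrow> 'p \<Rightarrow> complex) set" where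
  "M_S1 X x M = {h. vgerm_at cJ x h \<and>
     dbl h \<in> int_cl cJ2 (X \<times> X) (x, x) (gen_mod cJ2 (X \<times> X) (x, x) (dbl ` M))}"

definition M_S2 :: "(complex^'n) set \<Rightarrow> complex^'n \<Rightarrow> (complex^'n \<Rightarrow> 'p::finite \<Rightarrow> complex) set \<Rightarrow> (complex^'n \<Rightarrow> 'p \<Rightarrow> complex) set" where
  "M_S2 X x M = {h. vgerm_at cJ x h \<and>
     (\<forall>\<psi>. vgerm_at cJ x \<psi> \<longrightarrow> pdot \<psi> h \<in> lip_sat X x (gen_mod cJ X x (pdot \<psi> ` M)))}"

end

theory Submission
  imports Defs
begin

lemma germ_const: "germ_at J y (\<lambda>z. c)"
  unfolding germ_at_def holo_on_def
  by (rule exI[of _ UNIV]) (auto intro!: exI[of _ "\<lambda>v. 0"])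

lemma germ_add:
  assumes "germ_at J y f" "germ_at J y g"
  shows "germ_at J y (\<lambda>z. f z + g z)"
proof -
  obtain U V where U: "y \<in> U" "holo_on J U f" and V: "y \<in> V" "holo_on J V g"
    using assms unfolding germ_at_def by blast
  have "holo_on J (U \<inter> V) (\<lambda>z. f z + g z)"
    unfolding holo_on_def
  proof (intro conjI ballI)
    show "open (U \<inter> V)" using U V unfolding holo_on_def by auto
    fix z assume z: "z \<in> U \<inter> V"
    obtain D1 where D1: "(f has_derivative D1) (at z)" "\<forall>v. D1 (J v) = \<i> * D1 v"
      using U z unfolding holo_on_def by blast
    obtain D2 where D2: "(g has_derivative D2) (at z)" "\<forall>v. D2 (J v) = \<i> * D2 v"
      using V z unfolding holo_on_def by blast
    show "\<exists>D. ((\<lambda>z. f z + g z) has_derivative D) (at z) \<and> (\<forall>v. D (J v) = \<i> * D v)"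
      by (rule exI[of _ "\<lambda>v. D1 v + D2 v"])
         (use D1 D2 in \<open>auto intro!: has_derivative_add simp: distrib_left\<close>)
  qed
  then show ?thesis unfolding germ_at_def using U V by blast
qed

lemma germ_mult:
  assumes "germ_at J y f" "germ_at J y g"
  shows "germ_at J y (\<lambda>z. f z * g z)"
proof -
  obtain U V where U: "y \<in> U" "holo_on J U f" and V: "y \<in> V" "holo_on J V g"
    using assms unfolding germ_at_def by blast
  have "holo_on J (U \<inter> V) (\<lambda>z. f z * g z)"
    unfolding holo_on_def
  proof (intro conjI ballI)
    show "open (U \<inter> V)" using U V unfolding holo_on_def by auto
    fix z assume z: "z \<in> U \<inter> V"
    obtain D1 where D1: "(f has_derivative D1) (at z)" "\<forall>v. D1 (J v) = \<i> * D1 v"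
      using U z unfolding holo_on_def by blast
    obtain D2 where D2: "(g has_derivative D2) (at z)" "\<forall>v. D2 (J v) = \<i> * D2 v"
      using V z unfolding holo_on_def by blast
    show "\<exists>D. ((\<lambda>z. f z * g z) has_derivative D) (at z) \<and> (\<forall>v. D (J v) = \<i> * D v)"
      using has_derivative_mult[OF D1(1) D2(1)] D1(2) D2(2)
      by (intro exI[of _ "\<lambda>v. f z * D2 v + D1 v * g z"]) (simp add: algebra_simps)
  qed
  then show ?thesis unfolding germ_at_def using U V by blast
qed

lemma germ_sum:
  assumes "finite A" "\<And>i. i \<in> A \<Longrightarrow> germ_at J y (f i)"
  shows "germ_at J y (\<lambda>z. \<Sum>i\<in>A. f i z)"
  using assms
proof (induction A rule: finite_induct)
  case empty
  then show ?case using germ_const[of J y 0] by simp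
next
  case (insert a A)
  then show ?case by (simp add: germ_add)
qed

lemma germ_fst:
  fixes y y' :: "complex^'n"
  assumes "germ_at cJ y f"
  shows "germ_at cJ2 (y, y') (\<lambda>w. f (fst w))"
proof -
  obtain U where U: "y \<in> U" "holo_on cJ U f"
    using assms unfolding germ_at_def by blast
  have "holo_on cJ2 (U \<times> (UNIV :: (complex^'n) set)) (\<lambda>w. f (fst w))"
    unfolding holo_on_def
  proof (intro conjI ballI)
    show "open (U \<times> (UNIV :: (complex^'n) set))" using U unfolding holo_on_def
      by (auto intro: open_Times)
    fix z assume z: "z \<in> U \<times> (UNIV :: (complex^'n) set)"
    obtain D1 where D1: "(f has_derivative D1) (at (fst z))" "\<forall>v. D1 (cJ v) = \<i> * D1 v"
      using U z unfolding holo_on_def by (cases z) auto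
    have "((\<lambda>w. f (fst w)) has_derivative (\<lambda>v. D1 (fst v))) (at z)"
      by (rule has_derivative_compose[OF has_derivative_fst[OF has_derivative_ident] D1(1)])
    then show "\<exists>D. ((\<lambda>w. f (fst w)) has_derivative D) (at z) \<and> (\<forall>v. D (cJ2 v) = \<i> * D v)"
      using D1(2) by (intro exI[of _ "\<lambda>v. D1 (fst v)"]) (auto simp: cJ2_def cJ_def[symmetric])
  qed
  then show ?thesis unfolding germ_at_def using U
    by (intro exI[of _ "U \<times> (UNIV :: (complex^'n) set)"]) auto
qed

lemma germ_snd:
  fixes y y' :: "complex^'n"
  assumes "germ_at cJ y f"
  shows "germ_at cJ2 (y', y) (\<lambda>w. f (snd w))"
proof -
  obtain U where U: "y \<in> U" "holo_on cJ U f"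
    using assms unfolding germ_at_def by blast
  have "holo_on cJ2 ((UNIV :: (complex^'n) set) \<times> U) (\<lambda>w. f (snd w))"
    unfolding holo_on_def
  proof (intro conjI ballI)
    show "open ((UNIV :: (complex^'n) set) \<times> U)" using U unfolding holo_on_def
      by (auto intro: open_Times)
    fix z assume z: "z \<in> (UNIV :: (complex^'n) set) \<times> U"
    obtain D1 where D1: "(f has_derivative D1) (at (snd z))" "\<forall>v. D1 (cJ v) = \<i> * D1 v"
      using U z unfolding holo_on_def by (cases z) auto
    have "((\<lambda>w. f (snd w)) has_derivative (\<lambda>v. D1 (snd v))) (at z)"
      by (rule has_derivative_compose[OF has_derivative_snd[OF has_derivative_ident] D1(1)])
    then show "\<exists>D. ((\<lambda>w. f (snd w)) has_derivative D) (at z) \<and> (\<forall>v. D (cJ2 v) = \<i> * D v)"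
      using D1(2) by (intro exI[of _ "\<lambda>v. D1 (snd v)"]) (auto simp: cJ2_def cJ_def[symmetric])
  qed
  then show ?thesis unfolding germ_at_def using U
    by (intro exI[of _ "(UNIV :: (complex^'n) set) \<times> U"]) auto
qed

definition psiD :: "('b \<Rightarrow> 'p::finite \<Rightarrow> complex) \<Rightarrow> ('b \<times> 'b \<Rightarrow> 'p + 'p \<Rightarrow> complex)
    \<Rightarrow> ('b \<times> 'b \<Rightarrow> unit + unit \<Rightarrow> complex)" where
  "psiD \<psi> g = (\<lambda>w u. case u of Inl _ \<Rightarrow> (\<Sum>i\<in>UNIV. \<psi> (fst w) i * g w (Inl i))
                               | Inr _ \<Rightarrow> (\<Sum>i\<in>UNIV. \<psi> (snd w) i * g w (Inr i)))"

lemma dbl_pdot: "dbl (pdot \<psi> f) = psiD \<psi> (dbl f)"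
  by (auto simp: dbl_def pdot_def psiD_def fun_eq_iff split: sum.splits)

lemma psiD_lin:
  assumes "\<forall>i. F w i = (\<Sum>j<k. c j * G j w i)"
  shows "psiD \<psi> F w u = (\<Sum>j<k. c j * psiD \<psi> (G j) w u)"
proof (cases u)
  case (Inl a)
  have "(\<Sum>i\<in>UNIV. \<psi> (fst w) i * (\<Sum>j<k. c j * G j w (Inl i)))
        = (\<Sum>j<k. c j * (\<Sum>i\<in>UNIV. \<psi> (fst w) i * G j w (Inl i)))"
    by (simp add: sum_distrib_left mult_ac sum.swap[of _ UNIV])
  then show ?thesis using Inl assms by (simp add: psiD_def)
next
  case (Inr a)
  have "(\<Sum>i\<in>UNIV. \<psi> (snd w) i * (\<Sum>j<k. c j * G j w (Inr i)))
        = (\<Sum>j<k. c j * (\<Sum>i\<in>UNIV. \<psi> (snd w) i * G j w (Inr i)))"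
    by (simp add: sum_distrib_left mult_ac sum.swap[of _ UNIV])
  then show ?thesis using Inr assms by (simp add: psiD_def)
qed

lemma vgerm_psiD:
  assumes "vgerm_at cJ2 (x, x) F" "vgerm_at cJ x \<psi>"
  shows "vgerm_at cJ2 (x, x) (psiD \<psi> F)"
  unfolding vgerm_at_def
proof
  fix u :: "unit + unit"
  show "germ_at cJ2 (x, x) (\<lambda>z. psiD \<psi> F z u)"
  proof (cases u)
    case (Inl a)
    have "germ_at cJ2 (x, x) (\<lambda>z. \<Sum>i\<in>UNIV. \<psi> (fst z) i * F z (Inl i))"
      using assms unfolding vgerm_at_def
      by (intro germ_sum germ_mult germ_fst) auto
    then show ?thesis using Inl by (simp add: psiD_def)
  next
    case (Inr a)
    have "germ_at cJ2 (x, x) (\<lambda>z. \<Sum>i\<in>UNIV. \<psi> (snd z) i * F z (Inr i))"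
      using assms unfolding vgerm_at_def
      by (intro germ_sum germ_mult germ_snd) auto
    then show ?thesis using Inr by (simp add: psiD_def)
  qed
qed

lemma vgerm_pdot:
  assumes "vgerm_at cJ x h" "vgerm_at cJ x \<psi>"
  shows "vgerm_at cJ x (pdot \<psi> h)"
  using assms unfolding vgerm_at_def pdot_def
  by (auto intro!: germ_sum germ_mult)

lemma pdot_in_gen:
  assumes "is_submodule cJ X x M" "m \<in> M" "vgerm_at cJ x \<psi>"
  shows "pdot \<psi> m \<in> gen_mod cJ X x (pdot \<psi> ` M)"
proof -
  have vm: "vgerm_at cJ x m" using assms unfolding is_submodule_def by blast
  show ?thesis unfolding gen_mod_def
    apply (intro CollectI conjI)
     apply (rule vgerm_pdot[OF vm assms(3)])
    apply (rule exI[of _ 1], rule exI[of _ "\<lambda>_ _. 1"], rule exI[of _ "\<lambda>_. pdot \<psi> m"])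
    using assms(2) germ_const[of cJ x 1]
    by (auto simp: germ_eq_on_def intro!: exI[of _ UNIV])
qed

theorem proposition2p8:
  fixes X :: "(complex^'n) set" and x :: "complex^'n"
    and M :: "(complex^'n \<Rightarrow> 'p::finite \<Rightarrow> complex) set"
  assumes "analytic_variety X" and "x \<in> X" and "is_submodule cJ X x M"
  shows "M_S1 X x M \<subseteq> M_S2 X x M"
proof
  fix h assume "h \<in> M_S1 X x M"
  then have vh: "vgerm_at cJ x h"
    and hcl: "dbl h \<in> int_cl cJ2 (X \<times> X) (x, x) (gen_mod cJ2 (X \<times> X) (x, x) (dbl ` M))"
    unfolding M_S1_def by auto
  show "h \<in> M_S2 X x M"
    unfolding M_S2_def
  proof (intro CollectI conjI allI impI)
    show "vgerm_at cJ x h" by (rule vh)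
    fix \<psi> :: "complex^'n \<Rightarrow> 'p \<Rightarrow> complex"
    assume vpsi: "vgerm_at cJ x \<psi>"
    define I where "I = gen_mod cJ X x (pdot \<psi> ` M)"
    have gmem: "psiD \<psi> g \<in> gen_mod cJ2 (X \<times> X) (x, x) (dbl ` I)"
      if g: "g \<in> gen_mod cJ2 (X \<times> X) (x, x) (dbl ` M)" for g
    proof -
      from g have vg: "vgerm_at cJ2 (x, x) g" unfolding gen_mod_def by blast
      from g obtain k :: nat and b G where bG: "\<forall>l<k. germ_at cJ2 (x, x) (b l) \<and> G l \<in> dbl ` M"
        and eq: "germ_eq_on (X \<times> X) (x, x) g (\<lambda>z i. \<Sum>l<k. b l z * G l z i)"
        unfolding gen_mod_def mem_Collect_eq by blast
      have G': "psiD \<psi> (G l) \<in> dbl ` I" if lk: "l < k" for l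
      proof -
        obtain m where m: "m \<in> M" "G l = dbl m" using bG lk by blast
        have "pdot \<psi> m \<in> I" unfolding I_def by (rule pdot_in_gen[OF assms(3) m(1) vpsi])
        then show ?thesis unfolding m(2) dbl_pdot[symmetric] by (rule imageI)
      qed
      from eq obtain U where U: "open U" "(x, x) \<in> U"
        "\<forall>z\<in>U \<inter> (X \<times> X). g z = (\<lambda>i. \<Sum>l<k. b l z * G l z i)"
        unfolding germ_eq_on_def by blast
      have "germ_eq_on (X \<times> X) (x, x) (psiD \<psi> g) (\<lambda>z u. \<Sum>l<k. b l z * psiD \<psi> (G l) z u)"
        unfolding germ_eq_on_def
      proof (intro exI[of _ U] conjI ballI U(1) U(2))
        fix z assume "z \<in> U \<inter> (X \<times> X)"
        then have gz: "\<forall>i. g z i = (\<Sum>l<k. b l z * G l z i)" using U(3) by auto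
        show "psiD \<psi> g z = (\<lambda>u. \<Sum>l<k. b l z * psiD \<psi> (G l) z u)"
        proof (rule ext)
          fix u
          show "psiD \<psi> g z u = (\<Sum>l<k. b l z * psiD \<psi> (G l) z u)"
            by (rule psiD_lin) (rule gz)
        qed
      qed
      then show ?thesis unfolding gen_mod_def mem_Collect_eq
        apply (intro conjI vgerm_psiD[OF vg vpsi])
        apply (rule exI[of _ k], rule exI[of _ b], rule exI[of _ "\<lambda>l. psiD \<psi> (G l)"])
        using bG G' by simp
    qed
    have vd: "vgerm_at cJ2 (x, x) (dbl h)" using hcl unfolding int_cl_def by blast
    show "pdot \<psi> h \<in> lip_sat X x (gen_mod cJ X x (pdot \<psi> ` M))"
      unfolding lip_sat_def I_def[symmetric]
    proof (intro CollectI conjI)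
      show "vgerm_at cJ x (pdot \<psi> h)" by (rule vgerm_pdot[OF vh vpsi])
      show "dbl (pdot \<psi> h) \<in> int_cl cJ2 (X \<times> X) (x, x) (gen_mod cJ2 (X \<times> X) (x, x) (dbl ` I))"
        unfolding int_cl_def dbl_pdot
      proof (intro CollectI conjI allI impI)
        show "vgerm_at cJ2 (x, x) (psiD \<psi> (dbl h))" by (rule vgerm_psiD[OF vd vpsi])
        fix \<phi> assume "curve_at cJ2 (X \<times> X) (x, x) \<phi>"
        then obtain k :: nat and a g where ag: "\<forall>j<k. (\<exists>U. open U \<and> 0 \<in> U \<and> a j holomorphic_on U)
              \<and> g j \<in> gen_mod cJ2 (X \<times> X) (x, x) (dbl ` M)"
          and ev: "\<forall>\<^sub>F t in nhds 0. \<forall>i. dbl h (\<phi> t) i = (\<Sum>j<k. a j t * g j (\<phi> t) i)"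
          using hcl unfolding int_cl_def by blast
        show "\<exists>(k::nat) a g'. (\<forall>j<k. (\<exists>U. open U \<and> 0 \<in> U \<and> a j holomorphic_on U)
              \<and> g' j \<in> gen_mod cJ2 (X \<times> X) (x, x) (dbl ` I)) \<and>
              (\<forall>\<^sub>F t in nhds 0. \<forall>i. psiD \<psi> (dbl h) (\<phi> t) i = (\<Sum>j<k. a j t * g' j (\<phi> t) i))"
        proof (intro exI[of _ k] exI[of _ a] exI[of _ "\<lambda>j. psiD \<psi> (g j)"] conjI)
          show "\<forall>j<k. (\<exists>U. open U \<and> 0 \<in> U \<and> a j holomorphic_on U)
              \<and> psiD \<psi> (g j) \<in> gen_mod cJ2 (X \<times> X) (x, x) (dbl ` I)"
            using ag gmem by blast
          show "\<forall>\<^sub>F t in nhds 0. \<forall>i. psiD \<psi> (dbl h) (\<phi> t) i = (\<Sum>j<k. a j t * psiD \<psi> (g j) (\<phi> t) i)"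
            using ev
          proof eventually_elim
            case (elim t)
            then show ?case by (intro allI psiD_lin) simp
          qed
        qed
      qed
    qed
  qed
qed

end
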